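(* Let $a=1/4$, $d=3/4$, $e=1/2$. Let $U_1$ be the uninorm on $[0,1]$ defined by $U_1(p,q)=1$ if $\max(p,q)=1$; $U_1(p,q)=0$ if $\min(p,q)=0$ and $\max(p,q)<1$; and $U_1(p,q)=\big(\min(p^{2^{-n}},q^{2^{-m}})\big)^{2^{n+m}}$ if $p\in\,]2^{-2^{n+1}},2^{-2^{n}}]$, $q\in\,]2^{-2^{m+1}},2^{-2^{m}}]$, $n,m\in\mathbb{Z}$. Let $U_1^*(x,y)=\tfrac14+\tfrac12U_1(2(x-\tfrac14),2(y-\tfrac14))$ for $x,y\in\,]\tfrac14,\tfrac34[$. Let $$f(s)=\begin{cases}4s^2 & s\le \tfrac14,\\ 2(s-\tfrac14)^2+\tfrac14 & s\in\,]\tfrac14,\tfrac34[,\\ 4(s-\tfrac34)^2+\tfrac34 & s\ge\tfrac34,\end{cases}$$ with iterates $f^{(n)}$, $n\in\mathbb{Z}$ (so $f^{(n)}(s)=\tfrac14(4s)^{2^n}$ for $s\le\tfrac14$, $\tfrac14+\tfrac12(2(s-\tfrac14))^{2^n}$ for $s\in\,]\tfrac14,\tfrac34[$, $\tfrac34+\tfrac14(4(s-\tfrac34))^{2^n}$ for $s\ge\tfrac34$). Define $U:[0,1]^2\to[0,1]$ by $$U(x,y)=\begin{cases}1 & \max(x,y)=1,\\ 0 & x,y\in[0,a],\\ 1 & x,y\in[d,1[,\\ d & (x,y)\in[0,a]\times[d,1[\ \cup\ [d,1[\times[0,a],\\ f^{(n)}(x) & x\in[0,a]\cup[d,1[,\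 y\in\,]f^{(n+1)}(e),f^{(n)}(e)],\ n\in\mathbb{Z},\\ f^{(n)}(y) & y\in[0,a]\cup[d,1[,\ x\in\,]f^{(n+1)}(e),f^{(n)}(e)],\ n\in\mathbb{Z},\\ U_1^*(x,y) & x,y\in\,]a,d[.\end{cases}$$ Then $U$ is a disjunctive uninorm with neutral element $1/2$.
   Context: A uninorm is a map $U:[0,1]^2\to[0,1]$ that is commutative, associative, non-decreasing in each variable, and has a neutral element $e\in[0,1]$; it is disjunctive if $U(1,0)=1$. For a continuous strictly increasing bijection $f:[0,1]\to[0,1]$: $f^{(0)}=\mathrm{id}$, $f^{(n)}=f\circ f^{(n-1)}$ and $f^{(-n)}=f^{-1}\circ f^{(-n+1)}$ for $n\in\mathbb{N}$. The intervals $]f^{(n+1)}(1/2),f^{(n)}(1/2)]$, $n\in\mathbb{Z}$, partition $]1/4,3/4[$. *)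

theory Defs
  imports Complex_Main
begin

definition uninorm :: "(real \<Rightarrow> real \<Rightarrow> real) \<Rightarrow> real \<Rightarrow> bool" where
  "uninorm U e \<longleftrightarrow>
     e \<in> {0..1} \<and>
     (\<forall>x\<in>{0..1}. \<forall>y\<in>{0..1}. U x y \<in> {0..1}) \<and>
     (\<forall>x\<in>{0..1}. \<forall>y\<in>{0..1}. U x y = U y x) \<and>
     (\<forall>x\<in>{0..1}. \<forall>y\<in>{0..1}. \<forall>z\<in>{0..1}. U (U x y) z = U x (U y z)) \<and>
     (\<forall>x1\<in>{0..1}. \<forall>x2\<in>{0..1}. \<forall>y\<in>{0..1}. x1 \<le> x2 \<longrightarrow> U x1 y \<le> U x2 y) \<and>
     (\<forall>x\<in>{0..1}. \<forall>y1\<in>{0..1}. \<forall>y2\<in>{0..1}. y1 \<le> y2 \<longrightarrow> U x y1 \<le> U x y2) \<and>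
     (\<forall>x\<in>{0..1}. U e x = x \<and> U x e = x)"

definition disjunctive :: "(real \<Rightarrow> real \<Rightarrow> real) \<Rightarrow> bool" where
  "disjunctive U \<longleftrightarrow> U 1 0 = 1"

definition fiter :: "(real \<Rightarrow> real) \<Rightarrow> int \<Rightarrow> real \<Rightarrow> real" where
  "fiter f n = (if 0 \<le> n then f ^^ nat n else (inv_into {0..1} f) ^^ nat (- n))"

definition U1 :: "real \<Rightarrow> real \<Rightarrow> real" where
  "U1 p q =
    (if max p q = 1 then 1
     else if min p q = 0 then 0
     else (let n = (THE n::int. p \<in> {2 powr (- (2 powr real_of_int (n+1))) <.. 2 powr (- (2 powr real_of_int n))});
               m = (THE m::int. q \<in> {2 powr (- (2 powr real_of_int (m+1))) <.. 2 powr (- (2 powr real_of_int m))})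
           in (min (p powr (2 powr (- real_of_int n))) (q powr (2 powr (- real_of_int m))))
                powr (2 powr real_of_int (n + m))))"

definition U1star :: "real \<Rightarrow> real \<Rightarrow> real" where
  "U1star x y = 1/4 + 1/2 * U1 (2 * (x - 1/4)) (2 * (y - 1/4))"

definition fF :: "real \<Rightarrow> real" where
  "fF s = (if s \<le> 1/4 then 4 * s^2
           else if s < 3/4 then 2 * (s - 1/4)^2 + 1/4
           else 4 * (s - 3/4)^2 + 3/4)"

definition idx :: "real \<Rightarrow> int" where
  "idx x = (THE n::int. x \<in> {fiter fF (n+1) (1/2) <.. fiter fF n (1/2)})"

definition UU :: "real \<Rightarrow> real \<Rightarrow> real" where
  "UU x y =
    (let a = (1/4::real); d = (3/4::real) in
     if max x y = 1 then 1
     else if x \<in> {0..a} \<and> y \<in> {0..a} then 0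
     else if x \<in> {d..<1} \<and> y \<in> {d..<1} then 1
     else if (x \<in> {0..a} \<and> y \<in> {d..<1}) \<or> (x \<in> {d..<1} \<and> y \<in> {0..a}) then d
     else if (x \<in> {0..a} \<or> x \<in> {d..<1}) \<and> y \<in> {a<..<d} then fiter fF (idx y) x
     else if (y \<in> {0..a} \<or> y \<in> {d..<1}) \<and> x \<in> {a<..<d} then fiter fF (idx x) y
     else U1star x y)"

end

theory Submission
  imports Defs
begin


definition kap :: "real \<Rightarrow> real" where "kap t = 2 powr (- (2 powr t))"
definition lam :: "real \<Rightarrow> real" where "lam p = log 2 (- log 2 p)"
definition GG :: "real \<Rightarrow> real \<Rightarrow> real" where
  "GG a b = of_int (\<lfloor>a\<rfloor> + \<lfloor>b\<rfloor>) + max (a - of_int \<lfloor>a\<rfloor>) (b - of_int \<lfloor>b\<rfloor>)"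

lemma kap_pos: "0 < kap t" by (simp add: kap_def)
lemma kap_lt1: "kap t < 1"
proof -
  have "2 powr (- (2 powr t)) < 2 powr 0" by (subst powr_less_cancel_iff) auto
  then show ?thesis by (simp add: kap_def)
qed
lemma lam_kap[simp]: "lam (kap t) = t" by (simp add: kap_def lam_def)
lemma kap_lam: assumes "0 < p" "p < 1" shows "kap (lam p) = p"
proof -
  have "log 2 p < 0" using assms by simp
  then show ?thesis using assms by (simp add: kap_def lam_def)
qed
lemma kap_less_iff[simp]: "kap a < kap b \<longleftrightarrow> b < a" by (simp add: kap_def)
lemma kap_le_iff[simp]: "kap a \<le> kap b \<longleftrightarrow> b \<le> a" by (simp add: kap_def)
lemma kap_powr: "kap s powr (2 powr k) = kap (s + k)"
  by (simp add: kap_def powr_powr powr_add)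
lemma min_kap: "min (kap a) (kap b) = kap (max a b)"
  by (auto simp: min_def max_def)

lemma the_kap: assumes "0 < p" "p < 1"
  shows "(THE n::int. p \<in> {2 powr (- (2 powr real_of_int (n+1))) <.. 2 powr (- (2 powr real_of_int n))}) = \<lfloor>lam p\<rfloor>"
proof -
  have eq: "p \<in> {2 powr (- (2 powr real_of_int (n+1))) <.. 2 powr (- (2 powr real_of_int n))} \<longleftrightarrow> \<lfloor>lam p\<rfloor> = n" for n :: int
  proof -
    have "p \<in> {2 powr (- (2 powr real_of_int (n+1))) <.. 2 powr (- (2 powr real_of_int n))}
       \<longleftrightarrow> kap (real_of_int n + 1) < kap (lam p) \<and> kap (lam p) \<le> kap (real_of_int n)"
      using kap_lam[OF assms] by (simp add: kap_def)
    also have "\<dots> \<longleftrightarrow> \<lfloor>lam p\<rfloor> = n" by (simp add: floor_eq_iff) linarith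
    finally show ?thesis .
  qed
  show ?thesis unfolding eq by auto
qed

lemma U1_kap: assumes "0 < p" "p < 1" "0 < q" "q < 1"
  shows "U1 p q = kap (GG (lam p) (lam q))"
proof -
  have m1: "max p q \<noteq> 1" "min p q \<noteq> 0" using assms by (auto simp: max_def min_def)
  have "U1 p q = (min (p powr (2 powr (- real_of_int \<lfloor>lam p\<rfloor>))) (q powr (2 powr (- real_of_int \<lfloor>lam q\<rfloor>))))
                powr (2 powr real_of_int (\<lfloor>lam p\<rfloor> + \<lfloor>lam q\<rfloor>))"
    unfolding U1_def using m1 the_kap[of p] the_kap[of q] assms by (simp add: Let_def)
  also have "\<dots> = kap (GG (lam p) (lam q))"
    using kap_lam[of p] kap_lam[of q] assms
    by (metis (no_types, lifting) kap_powr min_kap GG_def add.commute diff_conv_add_uminus of_int_add)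
  finally show ?thesis .
qed

lemma floor_GG: "\<lfloor>GG a b\<rfloor> = \<lfloor>a\<rfloor> + \<lfloor>b\<rfloor>"
  unfolding GG_def by (rule floor_unique) (auto simp: max_def; linarith)+

lemma GG_frac: "GG a b - of_int \<lfloor>GG a b\<rfloor> = max (a - of_int \<lfloor>a\<rfloor>) (b - of_int \<lfloor>b\<rfloor>)"
  unfolding floor_GG by (simp add: GG_def)

lemma GG_frac': "GG a b - of_int (\<lfloor>a\<rfloor> + \<lfloor>b\<rfloor>) = max (a - of_int \<lfloor>a\<rfloor>) (b - of_int \<lfloor>b\<rfloor>)"
  by (simp add: GG_def)

lemma GG_assoc: "GG (GG a b) c = GG a (GG b c)"
proof -
  have "GG (GG a b) c = of_int (\<lfloor>GG a b\<rfloor> + \<lfloor>c\<rfloor>) + max (GG a b - of_int \<lfloor>GG a b\<rfloor>) (c - of_int \<lfloor>c\<rfloor>)"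
    by (simp add: GG_def)
  also have "\<dots> = of_int (\<lfloor>a\<rfloor> + \<lfloor>b\<rfloor> + \<lfloor>c\<rfloor>) + max (max (a - of_int \<lfloor>a\<rfloor>) (b - of_int \<lfloor>b\<rfloor>)) (c - of_int \<lfloor>c\<rfloor>)"
    by (simp only: floor_GG GG_frac')
  also have "\<dots> = of_int (\<lfloor>a\<rfloor> + \<lfloor>GG b c\<rfloor>) + max (a - of_int \<lfloor>a\<rfloor>) (GG b c - of_int \<lfloor>GG b c\<rfloor>)"
    by (simp only: floor_GG GG_frac' max.assoc add.assoc)
  also have "\<dots> = GG a (GG b c)" by (simp add: GG_def)
  finally show ?thesis .
qed

lemma GG_comm: "GG a b = GG b a"
  by (simp add: GG_def max_def add.commute)

lemma GG_zero: "GG a 0 = a"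
proof -
  have "a - of_int \<lfloor>a\<rfloor> \<ge> 0" by linarith
  then have "max (a - of_int \<lfloor>a\<rfloor>) (0 - of_int \<lfloor>0::real\<rfloor>) = a - of_int \<lfloor>a\<rfloor>" by simp
  then show ?thesis unfolding GG_def by simp
qed

lemma GG_mono: assumes "a \<le> a'" shows "GG a b \<le> GG a' b"
proof (cases "\<lfloor>a\<rfloor> = \<lfloor>a'\<rfloor>")
  case True then show ?thesis using assms by (simp add: GG_def max_def)
next
  case False
  then have "\<lfloor>a\<rfloor> + 1 \<le> \<lfloor>a'\<rfloor>" using floor_mono[OF assms] by linarith
  then show ?thesis unfolding GG_def by (auto simp: max_def; linarith)+
qed




definition iota :: "real \<Rightarrow> real" where "iota t = 1/4 + 1/2 * kap t"
definition tau :: "real \<Rightarrow> real" where "tau x = lam (2 * (x - 1/4))"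
definition inA :: "real \<Rightarrow> bool" where "inA x \<longleftrightarrow> 0 \<le> x \<and> x \<le> 1/4"
definition inM :: "real \<Rightarrow> bool" where "inM x \<longleftrightarrow> 1/4 < x \<and> x < 3/4"
definition inH :: "real \<Rightarrow> bool" where "inH x \<longleftrightarrow> 3/4 \<le> x \<and> x < 1"

definition g :: "int \<Rightarrow> real \<Rightarrow> real" where
  "g n x = (if x \<le> 1/4 then 1/4 * (4*x) powr (2 powr n)
            else if x < 3/4 then iota (tau x + n)
            else 3/4 + 1/4 * (4*(x - 3/4)) powr (2 powr n))"

lemma iota_tau: "inM x \<Longrightarrow> iota (tau x) = x"
  unfolding iota_def tau_def inM_def by (subst kap_lam) (auto simp: field_simps)
lemma tau_iota[simp]: "tau (iota t) = t"
  unfolding iota_def tau_def by simp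
lemma inM_iota[simp]: "inM (iota t)"
  using kap_pos[of t] kap_lt1[of t] unfolding iota_def inM_def by auto
lemma iota_less_iff[simp]: "iota a < iota b \<longleftrightarrow> b < a" by (simp add: iota_def)
lemma iota_le_iff[simp]: "iota a \<le> iota b \<longleftrightarrow> b \<le> a" by (simp add: iota_def)
lemma tau_half[simp]: "tau (1/2) = 0" by (simp add: tau_def lam_def log_def ln_div)

lemma tau_anti: assumes "inM x" "inM y" "x \<le> y" shows "tau y \<le> tau x"
proof (rule ccontr)
  assume "\<not> tau y \<le> tau x"
  then have "iota (tau y) < iota (tau x)" by simp
  then show False using assms by (simp add: iota_tau)
qed

lemma reg_cases: "0 \<le> x \<Longrightarrow> x \<le> 1 \<Longrightarrow> x = 1 \<or> inA x \<or> inM x \<or> inH x"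
  unfolding inA_def inM_def inH_def by auto

lemma g_A: "inA x \<Longrightarrow> g n x = 1/4 * (4*x) powr (2 powr n)" by (simp add: g_def inA_def)
lemma g_M: "inM x \<Longrightarrow> g n x = iota (tau x + n)" by (simp add: g_def inM_def)
lemma g_H: "3/4 \<le> x \<Longrightarrow> g n x = 3/4 + 1/4 * (4*(x - 3/4)) powr (2 powr n)" by (simp add: g_def)

lemma inA_g[simp]: "inA x \<Longrightarrow> inA (g n x)"
proof -
  assume a: "inA x"
  have "(4*x) powr (2 powr n) \<le> 1" using a by (intro powr_le1) (auto simp: inA_def)
  then show ?thesis using a by (simp add: g_A inA_def)
qed
lemma inM_g[simp]: "inM x \<Longrightarrow> inM (g n x)" by (simp add: g_M)
lemma inH_g[simp]: "inH x \<Longrightarrow> inH (g n x)"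
proof -
  assume a: "inH x"
  have "(4*(x-3/4)) powr (2 powr n) < 1 powr (2 powr n)" using a
    by (intro powr_less_mono2) (auto simp: inH_def)
  then show ?thesis using a by (simp add: g_H inH_def)
qed
lemma g_one[simp]: "g n 1 = 1" by (simp add: g_H)
lemma g_zero[simp]: "g n 0 = 0" by (simp add: g_A inA_def)
lemma g_34[simp]: "g n (3/4) = 3/4" by (simp add: g_H)

lemma g_unit: "0 \<le> x \<Longrightarrow> x \<le> 1 \<Longrightarrow> 0 \<le> g n x \<and> g n x \<le> 1"
  apply (drule (1) reg_cases)
  apply (elim disjE)
  using inA_g[of x n] inM_g[of x n] inH_g[of x n] by (auto simp: inA_def inM_def inH_def)

lemma g_0: "0 \<le> x \<Longrightarrow> x \<le> 1 \<Longrightarrow> g 0 x = x"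
  apply (drule (1) reg_cases)
  apply (elim disjE)
  by (auto simp: g_A g_M g_H iota_tau powr_one inA_def inH_def field_simps)

lemma g_comp: assumes "0 \<le> x" "x \<le> 1" shows "g n (g m x) = g (m + n) x"
proof -
  have pw: "(b powr (2 powr m)) powr (2 powr n) = b powr (2 powr (real_of_int (m + n)))" for b :: real
    by (simp add: powr_powr powr_add[symmetric])
  from reg_cases[OF assms] show ?thesis
  proof (elim disjE)
    assume "x = 1" then show ?thesis by simp
  next
    assume a: "inA x"
    then show ?thesis using inA_g[OF a, of m] by (simp add: g_A pw)
  next
    assume a: "inM x"
    then show ?thesis using inM_g[OF a, of m] by (simp add: g_M add.assoc)
  next
    assume a: "inH x"
    then have "3/4 \<le> g m x" using inH_g[OF a, of m] by (simp add: inH_def)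
    then show ?thesis using a by (simp add: g_H pw inH_def)
  qed
qed

lemma fF_g: assumes "0 \<le> x" "x \<le> 1" shows "fF x = g 1 x"
proof -
  from reg_cases[OF assms] show ?thesis
  proof (elim disjE)
    assume "x = 1" then show ?thesis by (simp add: fF_def power2_eq_square)
  next
    assume a: "inA x"
    then show ?thesis by (simp add: g_A fF_def inA_def power2_eq_square)
  next
    assume a: "inM x"
    have "kap (tau x + 1) = kap (tau x) powr (2 powr 1)" by (simp only: kap_powr)
    also have "kap (tau x) = 2 * (x - 1/4)" using iota_tau[OF a] by (simp add: iota_def)
    finally have "kap (tau x + 1) = (2 * (x - 1/4))^2" using a by (simp add: inM_def)
    then show ?thesis using a by (simp add: g_M fF_def inM_def iota_def power2_eq_square algebra_simps)
  next
    assume a: "inH x"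
    then show ?thesis by (simp add: g_H fF_def inH_def power2_eq_square algebra_simps)
  qed
qed

lemma inv_fF: assumes "0 \<le> y" "y \<le> 1" shows "inv_into {0..1} fF y = g (-1) y"
proof (rule inv_into_f_eq)
  show "inj_on fF {0..1}"
  proof (rule inj_onI)
    fix a b assume "a \<in> {0..1::real}" "b \<in> {0..1::real}" "fF a = fF b"
    then have "g (-1) (g 1 a) = g (-1) (g 1 b)" by (simp add: fF_g)
    then show "a = b" using \<open>a \<in> _\<close> \<open>b \<in> _\<close> by (simp add: g_comp g_0)
  qed
  show "g (-1) y \<in> {0..1}" using g_unit[OF assms] by simp
  show "fF (g (-1) y) = y" using g_unit[OF assms, of "-1"] assms by (simp add: fF_g g_comp g_0)
qed

lemma fiter_g: assumes "0 \<le> x" "x \<le> 1" shows "fiter fF n x = g n x"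
proof -
  have pos: "(fF ^^ k) x = g (int k) x" for k
  proof (induction k)
    case 0 then show ?case using assms by (simp add: g_0)
  next
    case (Suc k)
    have "(fF ^^ Suc k) x = fF (g (int k) x)" using Suc by simp
    also have "\<dots> = g 1 (g (int k) x)" using g_unit[OF assms] by (simp add: fF_g)
    also have "\<dots> = g (int (Suc k)) x" using assms by (simp add: g_comp add.commute)
    finally show ?case .
  qed
  have neg: "(inv_into {0..1} fF ^^ k) x = g (- int k) x" for k
  proof (induction k)
    case 0 then show ?case using assms by (simp add: g_0)
  next
    case (Suc k)
    have "(inv_into {0..1} fF ^^ Suc k) x = inv_into {0..1} fF (g (- int k) x)" using Suc by simp
    also have "\<dots> = g (-1) (g (- int k) x)" using g_unit[OF assms] by (simp add: inv_fF)
    also have "\<dots> = g (- int (Suc k)) x" using assms by (simp add: g_comp algebra_simps)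
    finally show ?case .
  qed
  show ?thesis
  proof (cases "0 \<le> n")
    case True then show ?thesis using pos[of "nat n"] by (simp add: fiter_def)
  next
    case False then show ?thesis using neg[of "nat (-n)"] by (simp add: fiter_def)
  qed
qed

lemma idx_tau: assumes "inM x" shows "idx x = \<lfloor>tau x\<rfloor>"
proof -
  have h: "fiter fF k (1/2) = iota (real_of_int k)" for k
    by (subst fiter_g) (auto simp: g_M inM_def)
  have eq: "x \<in> {fiter fF (k+1) (1/2) <.. fiter fF k (1/2)} \<longleftrightarrow> \<lfloor>tau x\<rfloor> = k" for k
  proof -
    have "x \<in> {fiter fF (k+1) (1/2) <.. fiter fF k (1/2)} \<longleftrightarrow>
          iota (real_of_int k + 1) < iota (tau x) \<and> iota (tau x) \<le> iota (real_of_int k)"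
      using iota_tau[OF assms] by (simp add: h)
    also have "\<dots> \<longleftrightarrow> \<lfloor>tau x\<rfloor> = k" by (simp add: floor_eq_iff) linarith
    finally show ?thesis .
  qed
  show ?thesis unfolding idx_def eq by auto
qed




lemma U1star_eq: assumes "inM x" "inM y" shows "U1star x y = iota (GG (tau x) (tau y))"
  using assms unfolding U1star_def iota_def tau_def inM_def
  by (subst U1_kap) auto

lemma inM_U1star[simp]: "inM x \<Longrightarrow> inM y \<Longrightarrow> inM (U1star x y)" by (simp add: U1star_eq)
lemma idx_U1star: "inM x \<Longrightarrow> inM y \<Longrightarrow> idx (U1star x y) = idx x + idx y"
  by (simp add: U1star_eq idx_tau floor_GG)
lemma U1star_comm: "inM x \<Longrightarrow> inM y \<Longrightarrow> U1star x y = U1star y x"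
  by (simp add: U1star_eq GG_comm)
lemma U1star_assoc: "inM x \<Longrightarrow> inM y \<Longrightarrow> inM z \<Longrightarrow> U1star (U1star x y) z = U1star x (U1star y z)"
  by (simp add: U1star_eq GG_assoc)
lemma U1star_mono: "inM x \<Longrightarrow> inM x' \<Longrightarrow> inM y \<Longrightarrow> x \<le> x' \<Longrightarrow> U1star x y \<le> U1star x' y"
  by (simp add: U1star_eq GG_mono tau_anti)
lemma U1star_half: "inM x \<Longrightarrow> U1star x (1/2) = x"
  by (simp add: U1star_eq GG_zero iota_tau inM_def)

lemma idx_anti: "inM x \<Longrightarrow> inM y \<Longrightarrow> x \<le> y \<Longrightarrow> idx y \<le> idx x"
  by (simp add: idx_tau floor_mono tau_anti)

lemma g_mono_A: "inA x \<Longrightarrow> inA y \<Longrightarrow> x \<le> y \<Longrightarrow> g n x \<le> g n y"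
  by (simp add: g_A inA_def powr_mono2)
lemma g_mono_H: "inH x \<Longrightarrow> inH y \<Longrightarrow> x \<le> y \<Longrightarrow> g n x \<le> g n y"
  by (simp add: g_H inH_def powr_mono2)
lemma g_anti_A: "inA x \<Longrightarrow> n \<le> m \<Longrightarrow> g m x \<le> g n x"
  by (simp add: g_A inA_def powr_mono')
lemma g_anti_H: "inH x \<Longrightarrow> n \<le> m \<Longrightarrow> g m x \<le> g n x"
  by (simp add: g_H inH_def powr_mono')

lemma gidx_A: "inA y \<Longrightarrow> inM x1 \<Longrightarrow> inM x2 \<Longrightarrow> x1 \<le> x2 \<Longrightarrow> g (idx x1) y \<le> g (idx x2) y"
  by (simp add: g_anti_A idx_anti)
lemma gidx_H: "inH y \<Longrightarrow> inM x1 \<Longrightarrow> inM x2 \<Longrightarrow> x1 \<le> x2 \<Longrightarrow> g (idx x1) y \<le> g (idx x2) y"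
  by (simp add: g_anti_H idx_anti)

lemma bA: "inA x \<Longrightarrow> 0 \<le> g n x \<and> g n x \<le> 1/4" using inA_g[of x n] by (simp add: inA_def)
lemma bM: "inM x \<Longrightarrow> 1/4 < g n x \<and> g n x < 3/4" using inM_g[of x n] by (simp add: inM_def)
lemma bH: "inH x \<Longrightarrow> 3/4 \<le> g n x \<and> g n x < 1" using inH_g[of x n] by (simp add: inH_def)
lemma bT: "inM x \<Longrightarrow> inM y \<Longrightarrow> 1/4 < U1star x y \<and> U1star x y < 3/4"
  using inM_U1star[of x y] by (simp add: inM_def)

lemma fi: "inA x \<or> inH x \<Longrightarrow> fiter fF n x = g n x"
  by (rule fiter_g) (auto simp: inA_def inH_def)

lemma UU_1L: "y \<le> 1 \<Longrightarrow> UU 1 y = 1" by (simp add: UU_def)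
lemma UU_1R: "x \<le> 1 \<Longrightarrow> UU x 1 = 1" by (simp add: UU_def)
lemma UU_AA: "inA x \<Longrightarrow> inA y \<Longrightarrow> UU x y = 0" by (simp add: UU_def Let_def max_def inA_def)
lemma UU_HH: "inH x \<Longrightarrow> inH y \<Longrightarrow> UU x y = 1" by (simp add: UU_def Let_def max_def inH_def)
lemma UU_AH: "inA x \<Longrightarrow> inH y \<Longrightarrow> UU x y = 3/4" by (simp add: UU_def Let_def max_def inA_def inH_def)
lemma UU_HA: "inH x \<Longrightarrow> inA y \<Longrightarrow> UU x y = 3/4" by (simp add: UU_def Let_def max_def inA_def inH_def)
lemma UU_AM: "inA x \<Longrightarrow> inM y \<Longrightarrow> UU x y = g (idx y) x"
  using fi[of x] by (simp add: UU_def Let_def max_def inA_def inM_def)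
lemma UU_HM: "inH x \<Longrightarrow> inM y \<Longrightarrow> UU x y = g (idx y) x"
  using fi[of x] by (simp add: UU_def Let_def max_def inH_def inM_def)
lemma UU_MA: "inM x \<Longrightarrow> inA y \<Longrightarrow> UU x y = g (idx x) y"
  using fi[of y] by (simp add: UU_def Let_def max_def inA_def inM_def)
lemma UU_MH: "inM x \<Longrightarrow> inH y \<Longrightarrow> UU x y = g (idx x) y"
  using fi[of y] by (simp add: UU_def Let_def max_def inH_def inM_def)
lemma UU_MM: "inM x \<Longrightarrow> inM y \<Longrightarrow> UU x y = U1star x y"
  by (simp add: UU_def Let_def max_def inM_def)

lemmas UUs = UU_AA UU_HH UU_AH UU_HA UU_AM UU_HM UU_MA UU_MH UU_MM

lemma A0[simp]: "inA 0" and H34[simp]: "inH (3/4)" by (auto simp: inA_def inH_def)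

lemma UU_range: "0 \<le> x \<Longrightarrow> x \<le> 1 \<Longrightarrow> 0 \<le> y \<Longrightarrow> y \<le> 1 \<Longrightarrow> 0 \<le> UU x y \<and> UU x y \<le> 1"
  apply (drule (1) reg_cases, drule (1) reg_cases)
  apply (elim disjE)
  using bA[of x "idx y"] bA[of y "idx x"] bH[of x "idx y"] bH[of y "idx x"] bT[of x y]
  by (auto simp: UU_1L UU_1R UUs)

lemma gcA[simp]: "inA x \<Longrightarrow> g n (g m x) = g (m + n) x" by (rule g_comp) (auto simp: inA_def)
lemma gcH[simp]: "inH x \<Longrightarrow> g n (g m x) = g (m + n) x" by (rule g_comp) (auto simp: inH_def)

lemma UU_comm: "0 \<le> x \<Longrightarrow> x \<le> 1 \<Longrightarrow> 0 \<le> y \<Longrightarrow> y \<le> 1 \<Longrightarrow> UU x y = UU y x"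
  apply (drule (1) reg_cases, drule (1) reg_cases)
  apply (elim disjE)
  by (auto simp: UU_1L UU_1R UUs U1star_comm)



lemma UU_1x: "inA y \<Longrightarrow> UU 1 y = 1" "inM y \<Longrightarrow> UU 1 y = 1" "inH y \<Longrightarrow> UU 1 y = 1"
  "inA y \<Longrightarrow> UU y 1 = 1" "inM y \<Longrightarrow> UU y 1 = 1" "inH y \<Longrightarrow> UU y 1 = 1"
  by (auto simp: UU_1L UU_1R inA_def inM_def inH_def)

lemma UU_assoc: assumes "0 \<le> x" "x \<le> 1" "0 \<le> y" "y \<le> 1" "0 \<le> z" "z \<le> 1"
  shows "UU (UU x y) z = UU x (UU y z)"
proof -
  have r1: "UU x y \<le> 1" "UU y z \<le> 1" using UU_range assms by auto
  show ?thesis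
  using reg_cases[OF assms(1,2)] reg_cases[OF assms(3,4)] reg_cases[OF assms(5,6)]
  apply (elim disjE)
  apply (simp_all add: UU_1L UU_1R UUs idx_U1star U1star_assoc r1 assms UU_1x)
  apply (simp_all add: add.commute)
  done
qed
lemma UU_mono: assumes "0 \<le> x1" "x1 \<le> 1" "0 \<le> x2" "x2 \<le> 1" "0 \<le> y" "y \<le> 1" "x1 \<le> x2"
  shows "UU x1 y \<le> UU x2 y"
proof -
  have r1: "UU x1 y \<le> 1" "0 \<le> UU x1 y" "UU x2 y \<le> 1" using UU_range assms by auto
  show ?thesis
  using reg_cases[OF assms(1,2)] reg_cases[OF assms(3,4)] reg_cases[OF assms(5,6)] assms
    bA[of x1 "idx y"] bA[of x2 "idx y"] bA[of y "idx x1"] bA[of y "idx x2"]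
    bH[of x1 "idx y"] bH[of x2 "idx y"] bH[of y "idx x1"] bH[of y "idx x2"]
    bT[of x1 y] bT[of x2 y]
  apply (elim disjE)
  apply (simp_all add: UU_1L UU_1R UUs r1 UU_1x g_mono_A g_mono_H gidx_A gidx_H U1star_mono)
  apply (auto simp: inA_def inM_def inH_def)
  done
qed
lemma UU_neutral: assumes "0 \<le> x" "x \<le> 1" shows "UU (1/2) x = x \<and> UU x (1/2) = x"
proof -
  have h: "inM (1/2)" by (simp add: inM_def)
  have i: "idx (1/2) = 0" by (simp add: idx_tau[OF h])
  show ?thesis
    using reg_cases[OF assms] h i assms
    apply (elim disjE)
    apply (simp_all add: UU_1L UU_1R UUs U1star_half UU_1x)
    apply (auto simp: U1star_comm U1star_half g_0 inA_def inH_def)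
    done
qed

theorem mainTheorem12:
  shows "uninorm UU (1/2) \<and> disjunctive UU"
proof -
  have m2: "UU x y1 \<le> UU x y2" if "x \<in> {0..1}" "y1 \<in> {0..1}" "y2 \<in> {0..1}" "y1 \<le> y2" for x y1 y2
    using UU_mono[of y1 y2 x] UU_comm[of x y1] UU_comm[of x y2] that by auto
  show ?thesis
    unfolding uninorm_def disjunctive_def
    using UU_range UU_comm UU_assoc UU_mono UU_neutral m2 by (simp add: UU_1L)
qed

end
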